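(* Let $a,c,p\in\mathbb{C}$ with $-c\notin\mathbb{N}\cup\{0\}$. Define sequences $(u_n)_{n\ge0}$ and $(v_n)_{n\ge0}$ by $u_0=1$, $u_1=\frac{a}{c}+p$, $v_0=1$, $v_1=\frac{a}{c}-p$ and, for all integers $n\ge1$, \[ u_{n+1}=\frac{a+p(c+2n)+n}{(n+1)(c+n)}u_n-\frac{p(p+1)}{(n+1)(c+n)}u_{n-1}, \] \[ v_{n+1}=\frac{a-p(c+2n)+n}{(n+1)(c+n)}v_n-\frac{(p-1)p}{(n+1)(c+n)}v_{n-1}. \] Then \[ \cosh(pz)\,M(a,c;z)=\sum_{n=0}^\infty\frac{u_n+v_n}{2}z^n,\qquad z\in\mathbb{C}. \]
   Context: For $a\in\mathbb{C}$, $(a)_n=a(a+1)\cdots(a+n-1)$ denotes the Pochhammer symbol, with $(a)_0=1$. For $a,c\in\mathbb{C}$ with $-c\notin\mathbb{N}\cup\{0\}$, the confluent hypergeometric (Kummer) function is $M(a,c;z)=\sum_{n=0}^\infty \frac{(a)_n}{(c)_n\,n!}z^n$, $z\in\mathbb{C}$. *)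

theory Defs
  imports "HOL-Analysis.Analysis"
begin

definition kummerM :: "complex \<Rightarrow> complex \<Rightarrow> complex \<Rightarrow> complex" where
  "kummerM a c z = (\<Sum>n. pochhammer a n / (pochhammer c n * of_nat (fact n)) * z ^ n)"

text \<open>The sequence u_n; index Suc (Suc n) corresponds to u_{n+1} with n+1 >= 1 in the paper.\<close>
fun useq :: "complex \<Rightarrow> complex \<Rightarrow> complex \<Rightarrow> nat \<Rightarrow> complex" where
  "useq a c p 0 = 1"
| "useq a c p (Suc 0) = a / c + p"
| "useq a c p (Suc (Suc n)) =
     (let m = of_nat (Suc n) :: complex in
      (a + p * (c + 2 * m) + m) / ((m + 1) * (c + m)) * useq a c p (Suc n)
      - p * (p + 1) / ((m + 1) * (c + m)) * useq a c p n)"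

fun vseq :: "complex \<Rightarrow> complex \<Rightarrow> complex \<Rightarrow> nat \<Rightarrow> complex" where
  "vseq a c p 0 = 1"
| "vseq a c p (Suc 0) = a / c - p"
| "vseq a c p (Suc (Suc n)) =
     (let m = of_nat (Suc n) :: complex in
      (a - p * (c + 2 * m) + m) / ((m + 1) * (c + m)) * vseq a c p (Suc n)
      - (p - 1) * p / ((m + 1) * (c + m)) * vseq a c p n)"

end

theory Submission
  imports Defs "HOL-Computational_Algebra.Formal_Power_Series"
begin

definition kA :: "complex \<Rightarrow> complex \<Rightarrow> complex fps" where
  "kA a c = Abs_fps (\<lambda>k. pochhammer a k / (pochhammer c k * of_nat (fact k)))"

lemma kA_Suc:
  assumes "\<forall>k::nat. c \<noteq> - of_nat k"
  shows "(of_nat n + 1) * (c + of_nat n) * fps_nth (kA a c) (Suc n) = (a + of_nat n) * fps_nth (kA a c) n"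
proof -
  have p: "pochhammer c n \<noteq> 0" using assms by (auto simp: pochhammer_eq_0_iff)
  have q: "c + of_nat n \<noteq> 0" using assms by (metis add.commute add_eq_0_iff)
  have f: "(of_nat (fact (Suc n)) :: complex) = (of_nat n + 1) * of_nat (fact n)"
    by (simp add: of_nat_mult algebra_simps del: of_nat_fact)
  have fn: "(of_nat (fact n) :: complex) \<noteq> 0" by simp
  have "fps_nth (kA a c) (Suc n) = (pochhammer a n * (a + of_nat n)) / ((pochhammer c n * (c + of_nat n)) * ((of_nat n + 1) * of_nat (fact n)))"
    unfolding kA_def by (simp add: pochhammer_Suc f del: of_nat_fact) (simp add: distrib_right)
  also have "\<dots> = ((a + of_nat n) * (pochhammer a n / (pochhammer c n * of_nat (fact n)))) / ((of_nat n + 1) * (c + of_nat n))"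
    by (simp add: field_simps)
  also have "\<dots> = ((a + of_nat n) * fps_nth (kA a c) n) / ((of_nat n + 1) * (c + of_nat n))"
    unfolding kA_def by simp
  finally have h: "fps_nth (kA a c) (Suc n) = ((a + of_nat n) * fps_nth (kA a c) n) / ((of_nat n + 1) * (c + of_nat n))" .
  have nz: "(of_nat n + 1) * (c + of_nat n) \<noteq> 0" using q
    by (metis mult_eq_0_iff of_nat_Suc of_nat_eq_0_iff add.commute nat.distinct(1))
  show ?thesis unfolding h using nz by simp
qed

lemma kA_ode:
  assumes "\<forall>k::nat. c \<noteq> - of_nat k"
  shows "fps_X * fps_deriv (fps_deriv (kA a c)) + fps_const c * fps_deriv (kA a c)
     - fps_X * fps_deriv (kA a c) - fps_const a * kA a c = 0"
proof (rule fps_ext)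
  fix n
  show "fps_nth (fps_X * fps_deriv (fps_deriv (kA a c)) + fps_const c * fps_deriv (kA a c)
     - fps_X * fps_deriv (kA a c) - fps_const a * kA a c) n = fps_nth 0 n"
  proof (cases n)
    case 0
    then show ?thesis using kA_Suc[OF assms, of 0 a] by (simp add: algebra_simps)
  next
    case (Suc m)
    then show ?thesis using kA_Suc[OF assms, of n a] by (simp add: algebra_simps)
  qed
qed

definition kF :: "complex \<Rightarrow> complex \<Rightarrow> complex \<Rightarrow> complex fps" where
  "kF a c p = fps_exp p * kA a c"

lemma kF_ode:
  assumes "\<forall>k::nat. c \<noteq> - of_nat k"
  shows "fps_X * fps_deriv (fps_deriv (kF a c p)) + fps_const c * fps_deriv (kF a c p)
     - fps_X * fps_deriv (kF a c p) - 2 * fps_const p * (fps_X * fps_deriv (kF a c p))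
     + fps_const p * fps_const p * (fps_X * kF a c p) + fps_const p * (fps_X * kF a c p)
     - fps_const p * fps_const c * kF a c p - fps_const a * kF a c p = 0"
proof -
  define A where "A = kA a c"
  define E where "E = fps_exp p"
  define P where "P = fps_const p"
  define C where "C = fps_const c"
  define Aa where "Aa = fps_const a"
  have dE: "fps_deriv E = P * E" unfolding E_def P_def by simp
  have dP: "fps_deriv P = 0" unfolding P_def by simp
  have d1: "fps_deriv (kF a c p) = P * E * A + E * fps_deriv A"
    unfolding kF_def A_def[symmetric] E_def[symmetric] by (simp add: fps_deriv_mult dE algebra_simps)
  have d2: "fps_deriv (fps_deriv (kF a c p)) = P * P * E * A + 2 * P * E * fps_deriv A + E * fps_deriv (fps_deriv A)"
    unfolding d1 by (simp add: fps_deriv_mult dE dP algebra_simps)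
  have H: "fps_X * fps_deriv (fps_deriv A) + C * fps_deriv A - fps_X * fps_deriv A - Aa * A = 0"
    using kA_ode[OF assms, of a] unfolding A_def C_def Aa_def .
  have "fps_X * fps_deriv (fps_deriv (kF a c p)) + C * fps_deriv (kF a c p)
     - fps_X * fps_deriv (kF a c p) - 2 * P * (fps_X * fps_deriv (kF a c p))
     + P * P * (fps_X * kF a c p) + P * (fps_X * kF a c p)
     - P * C * kF a c p - Aa * kF a c p
     = E * (fps_X * fps_deriv (fps_deriv A) + C * fps_deriv A - fps_X * fps_deriv A - Aa * A)"
    unfolding d2 unfolding d1 unfolding kF_def A_def[symmetric] E_def[symmetric]
    by algebra
  also have "\<dots> = 0" using H by simp
  finally show ?thesis unfolding P_def C_def Aa_def .
qed

lemma kF_rec: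
  assumes "\<forall>k::nat. c \<noteq> - of_nat k"
  shows "(of_nat m + 2) * (c + of_nat m + 1) * fps_nth (kF a c p) (Suc (Suc m))
     = (a + p * (c + 2 * (of_nat m + 1)) + of_nat m + 1) * fps_nth (kF a c p) (Suc m)
       - p * (p + 1) * fps_nth (kF a c p) m"
proof -
  have "fps_nth (fps_X * fps_deriv (fps_deriv (kF a c p)) + fps_const c * fps_deriv (kF a c p)
     - fps_X * fps_deriv (kF a c p) - 2 * fps_const p * (fps_X * fps_deriv (kF a c p))
     + fps_const p * fps_const p * (fps_X * kF a c p) + fps_const p * (fps_X * kF a c p)
     - fps_const p * fps_const c * kF a c p - fps_const a * kF a c p) (Suc m) = 0"
    using kF_ode[OF assms, of a p] by simp
  then have "(of_nat m + 1) * (of_nat m + 2) * fps_nth (kF a c p) (Suc (Suc m))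
     + c * (of_nat m + 2) * fps_nth (kF a c p) (Suc (Suc m))
     - (of_nat m + 1) * fps_nth (kF a c p) (Suc m) - 2 * p * (of_nat m + 1) * fps_nth (kF a c p) (Suc m)
     + p * p * fps_nth (kF a c p) m + p * fps_nth (kF a c p) m
     - p * c * fps_nth (kF a c p) (Suc m) - a * fps_nth (kF a c p) (Suc m) = 0"
    by (simp add: fps_mult_left_const_nth numeral_2_eq_2 algebra_simps)
  then show ?thesis by (simp add: algebra_simps)
qed

lemma useq_kF:
  assumes "\<forall>k::nat. c \<noteq> - of_nat k"
  shows "useq a c p n = fps_nth (kF a c p) n"
  using assms
proof (induction a c p n rule: useq.induct)
  case (1 a c p)
  then show ?case by (simp add: kF_def kA_def fps_mult_nth)
next
  case (2 a c p)
  then show ?case by (simp add: kF_def kA_def fps_mult_nth)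
next
  case (3 a c p n)
  have r: "(of_nat n + 2) * (c + of_nat n + 1) * fps_nth (kF a c p) (Suc (Suc n))
     = (a + p * (c + 2 * (of_nat n + 1)) + of_nat n + 1) * fps_nth (kF a c p) (Suc n)
       - p * (p + 1) * fps_nth (kF a c p) n" by (rule kF_rec[OF 3(3)])
  have q: "c + (of_nat n + 1) \<noteq> 0" using 3(3)
    by (metis add.commute add_eq_0_iff of_nat_Suc)
  have nz: "(of_nat (Suc n) + 1) * (c + of_nat (Suc n)) \<noteq> (0::complex)"
  proof -
    have "(of_nat (Suc n) + 1 :: complex) = of_nat (Suc (Suc n))" by simp
    moreover have "(of_nat (Suc (Suc n)) :: complex) \<noteq> 0" by (simp only: of_nat_eq_0_iff)
    ultimately show ?thesis using q by (simp add: add.commute add.left_commute)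
  qed
  have gen: "\<And>D X Y F0 F1 F2::complex. D \<noteq> 0 \<Longrightarrow> D * F2 = X * F1 - Y * F0 \<Longrightarrow> X / D * F1 - Y / D * F0 = F2"
    by (simp add: field_simps)
  have r': "((of_nat (Suc n) + 1) * (c + of_nat (Suc n))) * fps_nth (kF a c p) (Suc (Suc n))
     = (a + p * (c + 2 * of_nat (Suc n)) + of_nat (Suc n)) * fps_nth (kF a c p) (Suc n)
       - p * (p + 1) * fps_nth (kF a c p) n"
    using r by (simp add: algebra_simps)
  show ?case unfolding useq.simps Let_def 3(1)[OF refl 3(3)] 3(2)[OF refl 3(3)]
    by (rule gen[OF nz r'])
qed

lemma ratio_lim:
  fixes a c z :: complex
  shows "(\<lambda>n. (a + of_nat n) * z / ((of_nat n + 1) * (c + of_nat n))) \<longlonglongrightarrow> 0"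
proof -
  have l1: "(\<lambda>n. inverse (of_nat n :: complex)) \<longlonglongrightarrow> 0" by (rule lim_inverse_n)
  have l2: "(\<lambda>n. inverse (of_nat (Suc n) :: complex)) \<longlonglongrightarrow> 0"
    using LIMSEQ_Suc[OF l1] .
  have "(\<lambda>n. ((a * inverse (of_nat n) + 1) * (z * inverse (of_nat (Suc n)))) / (c * inverse (of_nat n) + 1))
        \<longlonglongrightarrow> ((a * 0 + 1) * (z * 0)) / (c * 0 + 1)"
    by (intro tendsto_intros l1 l2) simp
  then have L: "(\<lambda>n. ((a * inverse (of_nat n) + 1) * (z * inverse (of_nat (Suc n)))) / (c * inverse (of_nat n) + 1))
        \<longlonglongrightarrow> 0" by simp
  show ?thesis
  proof (rule Lim_transform_eventually[OF L])
    show "\<forall>\<^sub>F n in sequentially. ((a * inverse (of_nat n) + 1) * (z * inverse (of_nat (Suc n)))) / (c * inverse (of_nat n) + 1)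
       = (a + of_nat n) * z / ((of_nat n + 1) * (c + of_nat n))"
      using eventually_ge_at_top[of "1::nat"]
    proof eventually_elim
      case (elim n)
      then have n0: "(of_nat n :: complex) \<noteq> 0" by simp
      have n1: "(of_nat n + 1 :: complex) \<noteq> 0"
        by (metis of_nat_Suc of_nat_eq_0_iff nat.distinct(1) add.commute)
      have e1: "a * inverse (of_nat n) + 1 = (a + of_nat n) / of_nat n" using n0 by (simp add: field_simps)
      have e2: "c * inverse (of_nat n) + 1 = (c + of_nat n) / of_nat n" using n0 by (simp add: field_simps)
      have g: "\<And>N A C Z N1::complex. N \<noteq> 0 \<Longrightarrow> N1 \<noteq> 0 \<Longrightarrow> C \<noteq> 0 \<Longrightarrow>
          ((A / N) * (Z * inverse N1)) / (C / N) = A * Z / (N1 * C)"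
        by (simp add: field_simps)
      show ?case
      proof (cases "c + of_nat n = 0")
        case True then show ?thesis unfolding e1 e2 by simp
      next
        case False
        have sn: "of_nat (Suc n) = (of_nat n + 1 :: complex)" by simp
        show ?thesis unfolding e1 e2 sn by (rule g[OF n0 n1 False])
      qed
    qed
  qed
qed

lemma kA_summable:
  assumes "\<forall>k::nat. c \<noteq> - of_nat k"
  shows "summable (\<lambda>n. norm (fps_nth (kA a c) n * z ^ n))"
proof -
  define rr where "rr n = (a + of_nat n) * z / ((of_nat n + 1) * (c + of_nat n))" for n
  have "(\<lambda>n. norm (rr n)) \<longlonglongrightarrow> 0"
    unfolding rr_def using tendsto_norm_zero[OF ratio_lim[of a z c]] .
  then have "\<forall>\<^sub>F n in sequentially. norm (rr n) < 1/2"
    by (rule order_tendstoD(2)) simp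
  then obtain N where N: "\<And>n. n \<ge> N \<Longrightarrow> norm (rr n) < 1/2"
    unfolding eventually_sequentially by blast
  have step: "fps_nth (kA a c) (Suc n) * z ^ Suc n = rr n * (fps_nth (kA a c) n * z ^ n)" for n
  proof -
    have q: "c + of_nat n \<noteq> 0" using assms by (metis add.commute add_eq_0_iff)
    have n1: "(of_nat n + 1 :: complex) \<noteq> 0"
      by (metis of_nat_Suc of_nat_eq_0_iff nat.distinct(1) add.commute)
    have "fps_nth (kA a c) (Suc n) = (a + of_nat n) * fps_nth (kA a c) n / ((of_nat n + 1) * (c + of_nat n))"
    proof -
      have D: "(of_nat n + 1) * (c + of_nat n) \<noteq> (0::complex)" using q n1 by simp
      show ?thesis using kA_Suc[OF assms, of n a] D by (metis nonzero_mult_div_cancel_left)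
    qed
    then show ?thesis unfolding rr_def by (simp add: field_simps)
  qed
  show ?thesis
  proof (rule summable_ratio_test[of "1/2" N])
    fix n assume "n \<ge> N"
    then have "norm (rr n) \<le> 1/2" using N by (simp add: less_imp_le)
    then have "norm (rr n) * norm (fps_nth (kA a c) n * z ^ n) \<le> 1/2 * norm (fps_nth (kA a c) n * z ^ n)"
      by (rule mult_right_mono) simp
    then show "norm (norm (fps_nth (kA a c) (Suc n) * z ^ Suc n)) \<le> 1/2 * norm (norm (fps_nth (kA a c) n * z ^ n))"
      unfolding step by (simp add: norm_mult)
  qed simp
qed

lemma useq_sums:
  assumes "\<forall>k::nat. c \<noteq> - of_nat k"
  shows "(\<lambda>n. useq a c p n * z ^ n) sums (exp (p * z) * kummerM a c z)"
proof -
  define e where "e k = (p * z) ^ k /\<^sub>R fact k" for k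
  define b where "b k = fps_nth (kA a c) k * z ^ k" for k
  have se: "summable (\<lambda>k. norm (e k))" unfolding e_def by (rule summable_norm_exp)
  have sb: "summable (\<lambda>k. norm (b k))" unfolding b_def by (rule kA_summable[OF assms])
  have E: "exp (p * z) = (\<Sum>k. e k)" unfolding e_def exp_def ..
  have K: "kummerM a c z = (\<Sum>k. b k)" unfolding b_def kummerM_def kA_def by simp
  have C: "(\<lambda>k. \<Sum>i\<le>k. e i * b (k - i)) sums (exp (p * z) * kummerM a c z)"
    unfolding E K by (rule Cauchy_product_sums[OF se sb])
  have eq: "(\<Sum>i\<le>k. e i * b (k - i)) = useq a c p k * z ^ k" for k
  proof -
    have "(\<Sum>i\<le>k. e i * b (k - i)) = (\<Sum>i\<le>k. (fps_nth (fps_exp p) i * fps_nth (kA a c) (k - i)) * z ^ k)"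
    proof (rule sum.cong[OF refl])
      fix i assume "i \<in> {..k}"
      then have ik: "z ^ i * z ^ (k - i) = z ^ k" by (simp add: power_add[symmetric])
      show "e i * b (k - i) = (fps_nth (fps_exp p) i * fps_nth (kA a c) (k - i)) * z ^ k"
        unfolding e_def b_def ik[symmetric]
        by (simp add: scaleR_conv_of_real power_mult_distrib divide_inverse mult_ac)
    qed
    also have "\<dots> = fps_nth (kF a c p) k * z ^ k"
      unfolding kF_def fps_mult_nth sum_distrib_right atLeast0AtMost ..
    finally show ?thesis using useq_kF[OF assms] by simp
  qed
  show ?thesis using C unfolding eq .
qed

lemma vseq_useq: "vseq a c p n = useq a c (- p) n"
  by (induction a c p n rule: vseq.induct) (simp_all add: Let_def algebra_simps)

theorem theorem2p3:
  fixes a c p z :: complex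
  assumes "\<forall>k::nat. c \<noteq> - of_nat k"
  shows "(\<lambda>n. (useq a c p n + vseq a c p n) / 2 * z ^ n) sums (cosh (p * z) * kummerM a c z)"
proof -
  have "(\<lambda>n. useq a c p n * z ^ n + vseq a c p n * z ^ n) sums
        (exp (p * z) * kummerM a c z + exp (- p * z) * kummerM a c z)"
    unfolding vseq_useq by (intro sums_add useq_sums[OF assms])
  then have "(\<lambda>n. (useq a c p n * z ^ n + vseq a c p n * z ^ n) / 2) sums
        ((exp (p * z) * kummerM a c z + exp (- p * z) * kummerM a c z) / 2)"
    by (rule sums_divide)
  moreover have "(exp (p * z) * kummerM a c z + exp (- p * z) * kummerM a c z) / 2 = cosh (p * z) * kummerM a c z"
    unfolding cosh_def by (simp add: algebra_simps add_divide_distrib scaleR_conv_of_real)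
  ultimately show ?thesis by (simp add: algebra_simps add_divide_distrib)
qed

end
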